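(* For all $t\in\mathbb N$ the probability distribution $c_t$ on $\mathbb Z$ has mean $0$ and variance $v_t$.
   Context: Let $\mathsf r(n)$ be the number of (overlapping) occurrences of $\mathtt{11}$ in the binary expansion of $n\in\mathbb N=\{0,1,\dots\}$, and $d(t,n)=\mathsf r(n+t)-\mathsf r(n)$. For $k\in\mathbb Z$ let $c_t(k)$ be the asymptotic density (which exists) of $\{n\in\mathbb N:d(t,n)=k\}$; these values form a probability distribution $c_t$ on $\mathbb Z$. Define $(v_t)_{t\in\mathbb N}$ by $v_0=0$, $v_1=3/2$, and $v_{4t}=v_{2t}$, $v_{4t+2}=v_{2t+1}+1$, $v_{2t+1}=\frac{v_t+v_{t+1}}2+\frac34$ for all $t\in\mathbb N$. *)

theory Defs
  imports "HOL-Analysis.Analysis"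
begin

text \<open>r n: number of (overlapping) occurrences of the block 11 in the binary
  expansion of n.  The lowest two binary digits of n are 11 iff n mod 4 = 3.\<close>
fun r :: "nat \<Rightarrow> nat" where
  "r n = (if n < 2 then 0 else (if n mod 4 = 3 then 1 else 0) + r (n div 2))"

definition d :: "nat \<Rightarrow> nat \<Rightarrow> int" where
  "d t n = int (r (n + t)) - int (r n)"

definition c :: "nat \<Rightarrow> int \<Rightarrow> real" where
  "c t k = lim (\<lambda>N. real (card {n. n < N \<and> d t n = k}) / real N)"

function v :: "nat \<Rightarrow> real" where
  "v n = (if n = 0 then 0 else if n = 1 then 3/2
          else if even n then (if even (n div 2) then v (n div 2) else v (n div 2) + 1)
          else (v (n div 2) + v (n div 2 + 1)) / 2 + 3/4)"
  by pat_completeness auto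
termination by (relation "Wellfounded.measure id") (auto elim!: oddE)

end

theory Submission imports Defs "HOL-Probability.Characteristic_Functions" "HOL-Real_Asymp.Real_Asymp"
begin


lemma r_even: "r (2*m) = r m"
proof -
  have "2*m mod 4 \<noteq> 3" by presburger
  then show ?thesis by (subst r.simps) auto
qed

lemma r_odd: "r (2*m+1) = (if odd m then 1 else 0) + r m"
proof (cases "m = 0")
  case True then show ?thesis by (simp add: r.simps[of 1] r.simps[of 0])
next
  case False
  have "(2*m+1) mod 4 = 3 \<longleftrightarrow> odd m" by presburger
  then show ?thesis using False by (subst r.simps) auto
qed

lemma d_ee: "d (2*t) (2*n) = d t n"
  unfolding d_def by (metis r_even add_mult_distrib2)
lemma d_eo: "d (2*t) (2*n+1) = d t n + of_bool (odd (n+t)) - of_bool (odd n)"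
proof -
  have "2*n+1+2*t = 2*(n+t)+1" by simp
  then show ?thesis unfolding d_def using r_odd[of n] r_odd[of "n+t"] by auto
qed
lemma d_oe: "d (2*t+1) (2*n) = d t n + of_bool (odd (n+t))"
proof -
  have "2*n+(2*t+1) = 2*(n+t)+1" by simp
  then show ?thesis unfolding d_def using r_even[of n] r_odd[of "n+t"] by auto
qed
lemma d_oo: "d (2*t+1) (2*n+1) = d (t+1) n - of_bool (odd n)"
proof -
  have "2*n+1+(2*t+1) = 2*(n+(t+1))" by simp
  then show ?thesis unfolding d_def using r_even[of "n+(t+1)"] r_odd[of "n"] by auto
qed
lemma d_0: "d 0 n = 0" unfolding d_def by simp

lemma d1_le: "d 1 n \<le> 1"
proof (induction n rule: less_induct)
  case (less n)
  show ?case
  proof (cases "even n")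
    case True
    then obtain m where "n = 2*m" by blast
    then show ?thesis using d_oe[of 0 m] by (simp add: d_0)
  next
    case False
    then obtain m where m: "n = 2*m+1" using oddE by blast
    then have "m < n" by simp
    then show ?thesis using less.IH[of m] d_oo[of 0 m] m by simp
  qed
qed



definition HM :: "(nat \<Rightarrow> real) \<Rightarrow> real \<Rightarrow> bool" where
  "HM f \<mu> \<longleftrightarrow> (\<lambda>N. (\<Sum>n<N. f n) / real N) \<longlonglongrightarrow> \<mu>"

lemma sum_split_even: fixes f :: "nat \<Rightarrow> 'a::comm_monoid_add" and M :: nat
  shows "(\<Sum>n<2*M. f n) = (\<Sum>n<M. f (2*n)) + (\<Sum>n<M. f (2*n+1))"
  by (induction M) (simp_all add: ac_simps)

lemma HM_split:
  assumes a: "HM (\<lambda>n. f (2*n)) a" and b: "HM (\<lambda>n. f (2*n+1)) b"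
  shows "HM f ((a+b)/2)"
  unfolding HM_def
proof (rule limseq_even_odd)
  define A where "A M = (\<Sum>n<M. f (2*n))" for M
  define B where "B M = (\<Sum>n<M. f (2*n+1))" for M
  have A: "(\<lambda>M. A M / real M) \<longlonglongrightarrow> a" using a unfolding HM_def A_def .
  have B: "(\<lambda>M. B M / real M) \<longlonglongrightarrow> b" using b unfolding HM_def B_def .
  have "(\<lambda>M. (A M / real M + B M / real M)/2) \<longlonglongrightarrow> (a+b)/2"
    by (intro tendsto_intros A B) simp
  moreover have "(\<lambda>M. (\<Sum>n<2*M. f n) / real (2*M)) = (\<lambda>M. (A M / real M + B M / real M)/2)"
    by (rule ext) (simp add: sum_split_even A_def B_def add_divide_distrib)
  ultimately show "(\<lambda>M. (\<Sum>n<2*M. f n) / real (2*M)) \<longlonglongrightarrow> (a+b)/2" by simp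
  have A1: "(\<lambda>M. A (Suc M) / real (Suc M)) \<longlonglongrightarrow> a"
    using A by (rule LIMSEQ_Suc)
  have h1: "(\<lambda>M. real (Suc M) / real (2*M+1)) \<longlonglongrightarrow> 1/2" by real_asymp
  have h2: "(\<lambda>M. real M / real (2*M+1)) \<longlonglongrightarrow> 1/2" by real_asymp
  have "(\<lambda>M. A (Suc M) / real (Suc M) * (real (Suc M) / real (2*M+1)) + B M / real M * (real M / real (2*M+1))) \<longlonglongrightarrow> a * (1/2) + b * (1/2)"
    by (intro tendsto_intros A1 B h1 h2)
  moreover have "(\<lambda>M. (\<Sum>n<2*M+1. f n) / real (2*M+1)) = (\<lambda>M. A (Suc M) / real (Suc M) * (real (Suc M) / real (2*M+1)) + B M / real M * (real M / real (2*M+1)))"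
  proof (rule ext)
    fix M
    have "(\<Sum>n<2*M+1. f n) = A (Suc M) + B M"
      by (simp add: sum_split_even A_def B_def)
    then show "(\<Sum>n<2*M+1. f n) / real (2*M+1) = A (Suc M) / real (Suc M) * (real (Suc M) / real (2*M+1)) + B M / real M * (real M / real (2*M+1))"
    proof -
      have e1: "A (Suc M) / real (Suc M) * (real (Suc M) / real (2*M+1)) = A (Suc M) / real (2*M+1)"
        by (simp del: of_nat_Suc)
      have e2: "B M / real M * (real M / real (2*M+1)) = B M / real (2*M+1)"
        by (cases "M = 0") (simp_all add: B_def)
      show ?thesis unfolding e1 e2 \<open>(\<Sum>n<2*M+1. f n) = A (Suc M) + B M\<close> by (simp add: add_divide_distrib)
    qed
  qed
  ultimately show "(\<lambda>M. (\<Sum>n<2*M+1. f n) / real (2*M+1)) \<longlonglongrightarrow> (a+b)/2"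
    by (simp only:) (simp add: add_divide_distrib)
qed

lemma HM_unique: "HM f a \<Longrightarrow> HM f b \<Longrightarrow> a = b"
  unfolding HM_def using LIMSEQ_unique by blast

lemma HM_const: "HM (\<lambda>n. x) x"
  unfolding HM_def
proof (rule Lim_transform_eventually)
  show "(\<lambda>N. x) \<longlonglongrightarrow> x" by simp
  show "\<forall>\<^sub>F N in sequentially. x = (\<Sum>n<N. x) / real N"
    using eventually_gt_at_top[of 0] by eventually_elim simp
qed

lemma HM_add: "HM f a \<Longrightarrow> HM g b \<Longrightarrow> HM (\<lambda>n. f n + g n) (a+b)"
  unfolding HM_def by (simp add: sum.distrib add_divide_distrib tendsto_add)

lemma HM_cong: "HM f a \<Longrightarrow> (\<And>n. f n = g n) \<Longrightarrow> HM g a"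
  unfolding HM_def by simp

lemma HM_nonneg: "HM f a \<Longrightarrow> (\<And>n. f n \<ge> 0) \<Longrightarrow> a \<ge> 0"
  unfolding HM_def by (rule LIMSEQ_le_const) (auto intro!: divide_nonneg_nonneg sum_nonneg)

lemma HM_lim: "HM f a \<Longrightarrow> lim (\<lambda>N. (\<Sum>n<N. f n) / real N) = a"
  unfolding HM_def by (rule limI)



definition I :: "nat \<Rightarrow> bool \<Rightarrow> int \<Rightarrow> nat \<Rightarrow> real" where
  "I t b k n = of_bool (d t n = k \<and> odd n = b)"

definition cd :: "nat \<Rightarrow> bool \<Rightarrow> int \<Rightarrow> real" where
  "cd t b k = lim (\<lambda>N. (\<Sum>n<N. I t b k n) / real N)"

definition Ex :: "nat \<Rightarrow> bool" where
  "Ex t \<longleftrightarrow> (\<forall>b k. HM (I t b k) (cd t b k))"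

abbreviation oi :: "nat \<Rightarrow> int" where "oi t \<equiv> of_bool (odd t)"

lemma I_ee: "I (2*t) b k (2*n) = (if b then 0 else I t False k n + I t True k n)"
  unfolding I_def d_ee by auto

lemma I_eo: "I (2*t) b k (2*n+1) = (if b then I t False (k - oi t) n + I t True (k + oi t) n else 0)"
  unfolding I_def d_eo by (cases "odd n"; cases "odd t") auto

lemma I_oe: "I (2*t+1) b k (2*n) = (if b then 0 else I t False (k - oi t) n + I t True (k - of_bool (even t)) n)"
  unfolding I_def d_oe by (cases "odd n"; cases "odd t") auto

lemma I_oo: "I (2*t+1) b k (2*n+1) = (if b then I (t+1) False k n + I (t+1) True (k+1) n else 0)"
  unfolding I_def d_oo by (cases "odd n") auto

lemma HM_split': "HM (\<lambda>n. f (2*n)) a \<Longrightarrow> HM (\<lambda>n. f (2*n+1)) b \<Longrightarrow> \<mu> = (a+b)/2 \<Longrightarrow> HM f \<mu>"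
  using HM_split by blast

lemma HM_cd: "HM (I t b k) x \<Longrightarrow> cd t b k = x"
  unfolding cd_def by (rule HM_lim)

lemma HM_ite: "(b \<Longrightarrow> HM f x) \<Longrightarrow> HM (\<lambda>n. if b then f n else 0) (if b then x else 0)"
  by (cases b) (auto intro: HM_const)

lemma HM_ite2: "(\<not>b \<Longrightarrow> HM f x) \<Longrightarrow> HM (\<lambda>n. if b then 0 else f n) (if b then 0 else x)"
  by (cases b) (auto intro: HM_const)

lemma Ex_D: "Ex t \<Longrightarrow> HM (I t b k) (cd t b k)"
  unfolding Ex_def by blast

lemma HM_ev:
  assumes "Ex u"
  shows "HM (I (2*u) b k) (if b then (cd u False (k - oi u) + cd u True (k + oi u))/2
                            else (cd u False k + cd u True k)/2)"
proof (rule HM_split')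
  show "HM (\<lambda>n. I (2*u) b k (2*n)) (if b then 0 else cd u False k + cd u True k)"
    unfolding I_ee by (intro HM_ite2 HM_add Ex_D assms)
  show "HM (\<lambda>n. I (2*u) b k (2*n+1)) (if b then cd u False (k - oi u) + cd u True (k + oi u) else 0)"
    unfolding I_eo by (intro HM_ite HM_add Ex_D assms)
qed auto

lemma HM_odF:
  assumes "Ex u"
  shows "HM (I (2*u+1) False k) ((cd u False (k - oi u) + cd u True (k - of_bool (even u)))/2)"
proof (rule HM_split')
  show "HM (\<lambda>n. I (2*u+1) False k (2*n)) (cd u False (k - oi u) + cd u True (k - of_bool (even u)))"
    unfolding I_oe if_False by (intro HM_add Ex_D assms)
  show "HM (\<lambda>n. I (2*u+1) False k (2*n+1)) 0"
    unfolding I_oo by (simp add: HM_const)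
qed auto

lemma HM_odT:
  assumes "HM (I (u+1) False k) x" "HM (I (u+1) True (k+1)) y"
  shows "HM (I (2*u+1) True k) ((x + y)/2)"
proof (rule HM_split')
  show "HM (\<lambda>n. I (2*u+1) True k (2*n)) 0"
    unfolding I_oe by (simp add: HM_const)
  show "HM (\<lambda>n. I (2*u+1) True k (2*n+1)) (x + y)"
    unfolding I_oo if_True by (intro HM_add assms)
qed auto

lemma Ex_ev: "Ex u \<Longrightarrow> Ex (2*u)"
  unfolding Ex_def[of "2*u"] using HM_ev HM_cd by metis

lemma Ex_od: "Ex u \<Longrightarrow> Ex (u+1) \<Longrightarrow> Ex (2*u+1)"
  unfolding Ex_def[of "2*u+1"]
proof (intro allI)
  fix b k assume u: "Ex u" and u1: "Ex (u+1)"
  show "HM (I (2 * u + 1) b k) (cd (2 * u + 1) b k)"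
  proof (cases b)
    case True
    then show ?thesis using HM_odT[OF Ex_D[OF u1] Ex_D[OF u1]] HM_cd by metis
  next
    case False
    then show ?thesis using HM_odF[OF u] HM_cd by metis
  qed
qed

lemma Ex_0: "Ex 0"
  unfolding Ex_def
proof (intro allI)
  fix b k
  have "HM (I 0 b k) ((of_bool (k = 0 \<and> \<not> b) + of_bool (k = 0 \<and> b))/2)"
  proof (rule HM_split')
    show "HM (\<lambda>n. I 0 b k (2*n)) (of_bool (k = 0 \<and> \<not> b))"
      unfolding I_def d_0 by (simp add: HM_const)
    show "HM (\<lambda>n. I 0 b k (2*n+1)) (of_bool (k = 0 \<and> b))"
      unfolding I_def d_0 by (simp add: HM_const)
  qed auto
  then show "HM (I 0 b k) (cd 0 b k)" using HM_cd by metis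
qed

lemma Ex_1: "Ex 1"
proof -
  have F: "HM (I 1 False k) (cd 1 False k)" for k
    using HM_odF[OF Ex_0, of k] HM_cd by (metis mult_0_right add_0)
  have T: "k \<ge> 2 - int m \<Longrightarrow> HM (I 1 True k) (cd 1 True k)" for k m
  proof (induction m arbitrary: k)
    case 0
    then have "I 1 True k = (\<lambda>n. 0)" using d1_le unfolding I_def by (auto intro!: ext) (smt (verit))
    then show ?case using HM_const[of 0] HM_cd by metis
  next
    case (Suc m)
    show ?case
    proof (cases "k \<ge> 2 - int m")
      case True then show ?thesis using Suc.IH by blast
    next
      case False
      then have "k + 1 \<ge> 2 - int m" using Suc.prems by simp
      then have "HM (I (0+1) True (k+1)) (cd 1 True (k+1))" using Suc.IH by simp
      moreover have "HM (I (0+1) False k) (cd 1 False k)" using F by simp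
      ultimately have "HM (I (2*0+1) True k) ((cd 1 False k + cd 1 True (k+1))/2)"
        using HM_odT by blast
      then have "HM (I 1 True k) ((cd 1 False k + cd 1 True (k+1))/2)" by simp
      then show ?thesis using HM_cd by metis
    qed
  qed
  have "HM (I 1 True k) (cd 1 True k)" for k :: int
    using T[where k=k and m="nat (2 - k)"] by simp
  then show ?thesis using F unfolding Ex_def by (metis (full_types))
qed

lemma Ex_all: "Ex t"
proof (induction t rule: less_induct)
  case (less t)
  show ?case
  proof (cases "t \<le> 1")
    case True
    then show ?thesis using Ex_0 Ex_1 by (cases t) auto
  next
    case False
    show ?thesis
    proof (cases "even t")
      case True
      then obtain u where "t = 2*u" by blast
      then show ?thesis using less False Ex_ev by simp
    next
      case odd: False
      then obtain u where u: "t = 2*u+1" using oddE by blast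
      then have "u < t" "u+1 < t" using False by auto
      then show ?thesis using less u Ex_od by blast
    qed
  qed
qed



lemma cd_ev: "cd (2*u) b k = (if b then (cd u False (k - oi u) + cd u True (k + oi u))/2
                            else (cd u False k + cd u True k)/2)"
  using HM_ev[OF Ex_all] HM_cd by blast

lemma cd_odF: "cd (2*u+1) False k = (cd u False (k - oi u) + cd u True (k - of_bool (even u)))/2"
  using HM_odF[OF Ex_all] HM_cd by blast

lemma cd_odT: "cd (2*u+1) True k = (cd (u+1) False k + cd (u+1) True (k+1))/2"
  using HM_odT[OF Ex_D[OF Ex_all] Ex_D[OF Ex_all]] HM_cd by blast

lemma cd_nonneg: "cd t b k \<ge> 0"
  using HM_nonneg[OF Ex_D[OF Ex_all]] unfolding I_def by simp

lemma cd_0: "cd 0 b k = of_bool (k = 0) / 2"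
proof -
  have "HM (I 0 b k) ((of_bool (k = 0 \<and> \<not> b) + of_bool (k = 0 \<and> b))/2)"
  proof (rule HM_split')
    show "HM (\<lambda>n. I 0 b k (2*n)) (of_bool (k = 0 \<and> \<not> b))"
      unfolding I_def d_0 by (simp add: HM_const)
    show "HM (\<lambda>n. I 0 b k (2*n+1)) (of_bool (k = 0 \<and> b))"
      unfolding I_def d_0 by (simp add: HM_const)
  qed auto
  then show ?thesis using HM_cd by (cases b) fastforce+
qed

lemma cd_1T_big: "k \<ge> 2 \<Longrightarrow> cd 1 True k = 0"
proof -
  assume "k \<ge> 2"
  then have "I 1 True k = (\<lambda>n. 0)" using d1_le unfolding I_def by (auto intro!: ext) (smt (verit))
  then show ?thesis using HM_const[of 0] HM_cd by metis
qed

definition Mom :: "(int \<Rightarrow> real) \<Rightarrow> real \<Rightarrow> real \<Rightarrow> real \<Rightarrow> bool" where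
  "Mom f s0 s1 s2 \<longleftrightarrow> (f has_sum s0) UNIV \<and> ((\<lambda>k. of_int k * f k) has_sum s1) UNIV
      \<and> ((\<lambda>k. (of_int k)^2 * f k) has_sum s2) UNIV"

lemma Mom_add: "Mom f a0 a1 a2 \<Longrightarrow> Mom g b0 b1 b2 \<Longrightarrow> Mom (\<lambda>k. f k + g k) (a0+b0) (a1+b1) (a2+b2)"
  unfolding Mom_def by (auto simp: distrib_left intro: has_sum_add)

lemma Mom_half: "Mom f a0 a1 a2 \<Longrightarrow> Mom (\<lambda>k. f k / 2) (a0/2) (a1/2) (a2/2)"
proof -
  assume "Mom f a0 a1 a2"
  then have h0: "(f has_sum a0) UNIV" and h1: "((\<lambda>k. of_int k * f k) has_sum a1) UNIV"
    and h2: "((\<lambda>k. (of_int k)^2 * f k) has_sum a2) UNIV" unfolding Mom_def by auto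
  show ?thesis unfolding Mom_def
    using has_sum_cmult_right[OF h0, of "1/2"] has_sum_cmult_right[OF h1, of "1/2"]
      has_sum_cmult_right[OF h2, of "1/2"] by (simp add: field_simps)
qed

lemma Mom_unique: "Mom f a0 a1 a2 \<Longrightarrow> Mom f b0 b1 b2 \<Longrightarrow> a0 = b0 \<and> a1 = b1 \<and> a2 = b2"
  unfolding Mom_def using has_sum_unique by blast

lemma Mom_shift:
  assumes "Mom f s0 s1 s2"
  shows "Mom (\<lambda>k. f (k - a)) s0 (s1 + of_int a * s0) (s2 + 2 * of_int a * s1 + (of_int a)^2 * s0)"
proof -
  have bij: "bij_betw (\<lambda>k::int. k - a) UNIV UNIV"
    by (rule bij_betwI[where g="\<lambda>k. k + a"]) auto
  have h0: "(f has_sum s0) UNIV" and h1: "((\<lambda>k. of_int k * f k) has_sum s1) UNIV"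
    and h2: "((\<lambda>k. (of_int k)^2 * f k) has_sum s2) UNIV" using assms unfolding Mom_def by auto
  have g1: "((\<lambda>j. (of_int j + of_int a) * f j) has_sum (s1 + of_int a * s0)) UNIV"
    using has_sum_add[OF h1 has_sum_cmult_right[OF h0, of "of_int a"]] by (simp add: distrib_right)
  have g2: "((\<lambda>j. (of_int j + of_int a)^2 * f j) has_sum (s2 + 2 * of_int a * s1 + (of_int a)^2 * s0)) UNIV"
    using has_sum_add[OF has_sum_add[OF h2 has_sum_cmult_right[OF h1, of "2 * of_int a"]] has_sum_cmult_right[OF h0, of "(of_int a)^2"]]
    by (simp add: power2_eq_square algebra_simps)
  have "((\<lambda>k. f (k - a)) has_sum s0) UNIV"
    using has_sum_reindex_bij_betw[OF bij, of f] h0 by simp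
  moreover have "((\<lambda>k. of_int k * f (k - a)) has_sum (s1 + of_int a * s0)) UNIV"
    using has_sum_reindex_bij_betw[OF bij, of "\<lambda>j. (of_int j + of_int a) * f j"] g1 by simp
  moreover have "((\<lambda>k. (of_int k)^2 * f (k - a)) has_sum (s2 + 2 * of_int a * s1 + (of_int a)^2 * s0)) UNIV"
    using has_sum_reindex_bij_betw[OF bij, of "\<lambda>j. (of_int j + of_int a)^2 * f j"] g2 by simp
  ultimately show ?thesis unfolding Mom_def by blast
qed



lemma has_sum_at0: "((\<lambda>k::int. if k = 0 then x else (0::real)) has_sum x) UNIV"
proof -
  have "((\<lambda>k::int. if k = 0 then x else (0::real)) has_sum x) {0}"
    using has_sum_finite[of "{0::int}" "\<lambda>k::int. if k = 0 then x else (0::real)"] by simp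
  then show ?thesis
    by (subst has_sum_cong_neutral[where T="{0}" and g="\<lambda>k::int. if k = 0 then x else (0::real)"]) auto
qed

lemma Mom_0: "Mom (cd 0 b) (1/2) 0 0"
proof -
  have e: "cd 0 b = (\<lambda>k. if k = 0 then 1/2 else 0)" by (rule ext) (simp add: cd_0)
  show ?thesis unfolding Mom_def e using has_sum_at0[of "1/2"]
    by (auto intro!: has_sum_0)
qed

lemma Mom_1F: "Mom (cd 1 False) (1/2) (1/4) (1/4)"
proof -
  have e: "cd 1 False = (\<lambda>k. (cd 0 False (k - 0) + cd 0 True (k - 1))/2)"
    using cd_odF[of 0] by (auto intro!: ext)
  have "Mom (\<lambda>k. (cd 0 False (k - 0) + cd 0 True (k - 1))/2) ((1/2 + 1/2)/2) ((0 + 0 + 1/2)/2) ((0 + 0 + 0 + 1/2)/2)"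
    using Mom_half[OF Mom_add[OF Mom_shift[OF Mom_0, where a=0] Mom_shift[OF Mom_0, where a=1]]] by simp
  then show ?thesis unfolding e by simp
qed

definition w :: "int \<Rightarrow> real" where "w k = 10 + (of_int k)^2"

lemma w_pos: "w k > 0" unfolding w_def by (simp add: add_pos_nonneg)

lemma w_shift: "w k \<le> 3/2 * w (k+1)"
proof -
  have "0 \<le> (of_int k + 3::real)^2 + 4" by simp
  then show ?thesis unfolding w_def by (simp add: power2_eq_square algebra_simps)
qed

lemma sum_1F_bound: "finite S \<Longrightarrow> (\<Sum>k\<in>S. w k * cd 1 False k) \<le> 21/4"
proof -
  assume S: "finite S"
  have e: "cd 1 False k = (of_bool (k = 0) + of_bool (k = 1))/4" for k
    using cd_odF[of 0 k] by (simp add: cd_0)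
  have e': "cd (Suc 0) False k = (of_bool (k = 0) + of_bool (k = 1))/4" for k
    using e by simp
  have "(\<Sum>k\<in>S. w k * cd 1 False k) = (\<Sum>k\<in>S \<inter> {0,1}. w k * cd 1 False k)"
    by (rule sum.mono_neutral_right) (auto simp: S e e')
  also have "\<dots> \<le> (\<Sum>k\<in>{0,1}. w k * cd 1 False k)"
    by (rule sum_mono2) (auto intro!: mult_nonneg_nonneg less_imp_le[OF w_pos] cd_nonneg)
  also have "\<dots> = 21/4" by (simp add: e e' w_def)
  finally show ?thesis .
qed

lemma X_bound: "(\<Sum>k\<in>{-K..1}. w k * cd 1 True k) \<le> 21/2"
proof -
  let ?f = "cd 1 True"
  let ?X = "\<Sum>k\<in>{-K..1}. w k * ?f k"
  have e: "?f k = (cd 1 False k + ?f (k+1))/2" for k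
    using cd_odT[of 0 k] by simp
  have "?X = (\<Sum>k\<in>{-K..1}. w k * cd 1 False k)/2 + (\<Sum>k\<in>{-K..1}. w k * ?f (k+1))/2"
    by (subst e) (simp add: sum_divide_distrib[symmetric] sum.distrib[symmetric] algebra_simps)
  also have "(\<Sum>k\<in>{-K..1}. w k * ?f (k+1)) \<le> (\<Sum>k\<in>{-K..1}. 3/2 * (w (k+1) * ?f (k+1)))"
  proof (rule sum_mono)
    fix k
    have "w k * ?f (k+1) \<le> (3/2 * w (k+1)) * ?f (k+1)"
      by (rule mult_right_mono[OF w_shift cd_nonneg])
    then show "w k * ?f (k+1) \<le> 3/2 * (w (k+1) * ?f (k+1))" by simp
  qed
  also have "(\<Sum>k\<in>{-K..1}. 3/2 * (w (k+1) * ?f (k+1))) = 3/2 * (\<Sum>j\<in>(\<lambda>k. k+1) ` {-K..1}. w j * ?f j)"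
  proof -
    have inj: "inj_on (\<lambda>k::int. k+1) {-K..1}" by (auto simp: inj_on_def)
    show ?thesis by (simp only: sum.reindex[OF inj] o_def sum_distrib_left)
  qed
  also have "(\<Sum>j\<in>(\<lambda>k. k+1) ` {-K..1}. w j * ?f j) \<le> (\<Sum>j\<in>insert 2 {-K..1}. w j * ?f j)"
    by (rule sum_mono2) (auto intro!: mult_nonneg_nonneg less_imp_le[OF w_pos] cd_nonneg)
  also have "\<dots> = ?X" using cd_1T_big[of 2] by simp
  finally have "?X \<le> (\<Sum>k\<in>{-K..1}. w k * cd 1 False k)/2 + 3/2 * ?X / 2" by simp
  moreover have "(\<Sum>k\<in>{-K..1}. w k * cd 1 False k) \<le> 21/4" by (rule sum_1F_bound) simp
  ultimately show ?thesis by simp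
qed

lemma cd_1T_nz: "cd 1 True k \<noteq> 0 \<Longrightarrow> k \<le> 1"
proof (rule ccontr)
  assume "cd 1 True k \<noteq> 0" "\<not> k \<le> 1"
  then show False using cd_1T_big[of k] by simp
qed

lemma w1T_summable: "(\<lambda>k. w k * cd 1 True k) summable_on UNIV"
proof (rule nonneg_bdd_above_summable_on)
  show "0 \<le> w k * cd 1 True k" for k by (intro mult_nonneg_nonneg less_imp_le[OF w_pos] cd_nonneg)
  show "bdd_above (sum (\<lambda>k. w k * cd 1 True k) ` {F. F \<subseteq> UNIV \<and> finite F})"
  proof (rule bdd_aboveI2)
    fix F :: "int set" assume "F \<in> {F. F \<subseteq> UNIV \<and> finite F}"
    then have F: "finite F" by simp
    define K where "K = Max (insert 0 (abs ` F))"
    have K: "\<bar>x\<bar> \<le> K" if "x \<in> F" for x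
      unfolding K_def using F that by (intro Max_ge) auto
    have "(\<Sum>k\<in>F. w k * cd 1 True k) = (\<Sum>k\<in>F \<inter> {..1}. w k * cd 1 True k)"
      by (rule sum.mono_neutral_right) (use cd_1T_nz in \<open>auto simp: F\<close>)
    also have "\<dots> \<le> (\<Sum>k\<in>{-K..1}. w k * cd 1 True k)"
      by (rule sum_mono2) (use K in \<open>force intro!: mult_nonneg_nonneg less_imp_le[OF w_pos] cd_nonneg\<close>)+
    also have "\<dots> \<le> 21/2" by (rule X_bound)
    finally show "(\<Sum>k\<in>F. w k * cd 1 True k) \<le> 21/2" .
  qed
qed

lemma Mom_1T_ex: "\<exists>s0 s1 s2. Mom (cd 1 True) s0 s1 s2"
proof -
  let ?f = "cd 1 True"
  have nn: "0 \<le> w k * ?f k" for k by (intro mult_nonneg_nonneg less_imp_le[OF w_pos] cd_nonneg)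
  have s0: "?f summable_on UNIV"
  proof (rule summable_on_comparison_test[OF w1T_summable])
    fix k
    have "1 * ?f k \<le> w k * ?f k"
      by (rule mult_right_mono[OF _ cd_nonneg]) (simp add: w_def add_increasing2)
    then show "?f k \<le> w k * ?f k" by simp
  qed (simp add: cd_nonneg)
  have s2: "(\<lambda>k. (of_int k)^2 * ?f k) summable_on UNIV"
    by (rule summable_on_comparison_test[OF w1T_summable])
      (auto simp: cd_nonneg w_def intro!: mult_right_mono)
  have "(\<lambda>k. norm (of_int k * ?f k)) summable_on UNIV"
  proof (rule summable_on_comparison_test[OF w1T_summable])
    show "0 \<le> norm (of_int k * ?f k)" for k by simp
    show "norm (of_int k * ?f k) \<le> w k * ?f k" for k
    proof -
      have "\<bar>k\<bar> \<le> k^2"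
      proof (cases "k = 0")
        case False
        then have "1 * \<bar>k\<bar> \<le> \<bar>k\<bar> * \<bar>k\<bar>" by (intro mult_right_mono) auto
        then show ?thesis by (simp add: power2_eq_square abs_mult[symmetric])
      qed simp
      then have "\<bar>of_int k::real\<bar> \<le> (of_int k)^2"
        by (metis of_int_abs of_int_le_iff of_int_power)
      then have "\<bar>of_int k::real\<bar> \<le> w k" unfolding w_def by simp
      then show ?thesis using cd_nonneg[of 1 True k]
        by (simp add: abs_mult mult_right_mono)
    qed
  qed
  then have s1: "(\<lambda>k. of_int k * ?f k) summable_on UNIV"
    using summable_on_iff_abs_summable_on_real by blast
  show ?thesis unfolding Mom_def using s0 s1 s2 has_sum_infsum by blast
qed

lemma Mom_1T: "Mom (cd 1 True) (1/2) (-1/4) (5/4)"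
proof -
  obtain s0 s1 s2 where M: "Mom (cd 1 True) s0 s1 s2" using Mom_1T_ex by blast
  have e: "cd 1 True = (\<lambda>k. (cd 1 False k + cd 1 True (k - (-1)))/2)"
    using cd_odT[of 0] by (auto intro!: ext)
  have "Mom (cd 1 True) ((1/2 + s0)/2) ((1/4 + (s1 - s0))/2) ((1/4 + (s2 - 2 * s1 + s0))/2)"
    using Mom_half[OF Mom_add[OF Mom_1F Mom_shift[OF M, of "-1"]]] e by simp
  from Mom_unique[OF M this] have A: "s0 = (1/2 + s0)/2" and B: "s1 = (1/4 + (s1 - s0))/2"
    and C: "s2 = (1/4 + (s2 - 2 * s1 + s0))/2" by blast+
  from A have A': "s0 = 1/2" by (simp add: field_simps)
  with B have B': "s1 = -1/4" by (simp add: field_simps)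
  with A' C have "s2 = 5/4" by (simp add: field_simps)
  note A' B' this
  then show ?thesis using M by blast
qed



lemma v_0: "v 0 = 0" by simp
lemma v_1: "v 1 = 3/2" by simp
lemma v_ev: "u \<ge> 1 \<Longrightarrow> v (2*u) = (if even u then v u else v u + 1)"
  by (subst v.simps) auto
lemma v_od: "u \<ge> 1 \<Longrightarrow> v (2*u+1) = (v u + v (u+1))/2 + 3/4"
proof -
  assume "u \<ge> 1"
  moreover have "(2*u+1) div 2 = u" by simp
  ultimately show ?thesis by (subst v.simps) auto
qed

definition av :: "nat \<Rightarrow> real" where "av t = (if odd t then 1/4 else 0)"

definition P :: "nat \<Rightarrow> bool" where
  "P t \<longleftrightarrow> (\<exists>q0 q1. Mom (cd t False) (1/2) (av t) q0 \<and> Mom (cd t True) (1/2) (- av t) q1 \<and> q0 + q1 = v t)"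

lemma P_0: "P 0"
  unfolding P_def av_def using Mom_0 by (intro exI[of _ 0]) auto

lemma P_1: "P 1"
  unfolding P_def av_def using Mom_1F Mom_1T by (intro exI[of _ "1/4"] exI[of _ "5/4"]) auto

lemma P_ev:
  assumes u: "u \<ge> 1" and IH: "P u"
  shows "P (2*u)"
proof -
  obtain q0 q1 where M0: "Mom (cd u False) (1/2) (av u) q0" and M1: "Mom (cd u True) (1/2) (- av u) q1"
    and q: "q0 + q1 = v u" using IH unfolding P_def by blast
  let ?o = "oi u"
  have eF: "cd (2*u) False = (\<lambda>k. (cd u False (k - 0) + cd u True (k - 0))/2)"
    using cd_ev by (auto intro!: ext)
  have eT: "cd (2*u) True = (\<lambda>k. (cd u False (k - ?o) + cd u True (k - (- ?o)))/2)"
    using cd_ev by (auto intro!: ext)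
  have A: "Mom (cd (2*u) False) ((1/2+1/2)/2) ((av u + 0 * (1/2) + (- av u + 0 * (1/2)))/2)
     ((q0 + 2 * 0 * av u + 0^2 * (1/2) + (q1 + 2 * 0 * (- av u) + 0^2 * (1/2)))/2)"
    unfolding eF using Mom_half[OF Mom_add[OF Mom_shift[OF M0, where a=0] Mom_shift[OF M1, where a=0]]] by simp
  have B: "Mom (cd (2*u) True) ((1/2+1/2)/2) ((av u + of_int ?o * (1/2) + (- av u + of_int (-?o) * (1/2)))/2)
     ((q0 + 2 * of_int ?o * av u + (of_int ?o)^2 * (1/2) + (q1 + 2 * of_int (-?o) * (- av u) + (of_int (-?o))^2 * (1/2)))/2)"
    unfolding eT using Mom_half[OF Mom_add[OF Mom_shift[OF M0, where a="?o"] Mom_shift[OF M1, where a="-?o"]]] by simp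
  show ?thesis unfolding P_def
  proof (intro exI conjI)
    show "Mom (cd (2*u) False) (1/2) (av (2*u)) ((q0+q1)/2)" using A by (simp add: av_def)
    show "Mom (cd (2*u) True) (1/2) (- av (2*u)) ((q0 + q1)/2 + 2 * of_int ?o * av u + (of_int ?o)^2 / 2)"
      using B by (cases "odd u") (simp_all add: av_def add_divide_distrib)
    show "(q0+q1)/2 + ((q0 + q1)/2 + 2 * of_int ?o * av u + (of_int ?o)^2 / 2) = v (2*u)"
      using q v_ev[OF u] by (cases "odd u") (simp_all add: av_def)
  qed
qed

lemma P_od:
  assumes u: "u \<ge> 1" and IH0: "P u" and IH1: "P (u+1)"
  shows "P (2*u+1)"
proof -
  obtain q0 q1 where M0: "Mom (cd u False) (1/2) (av u) q0" and M1: "Mom (cd u True) (1/2) (- av u) q1"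
    and q: "q0 + q1 = v u" using IH0 unfolding P_def by blast
  obtain p0 p1 where N0: "Mom (cd (u+1) False) (1/2) (av (u+1)) p0" and N1: "Mom (cd (u+1) True) (1/2) (- av (u+1)) p1"
    and p: "p0 + p1 = v (u+1)" using IH1 unfolding P_def by blast
  let ?o = "oi u"
  let ?e = "of_bool (even u) :: int"
  have eF: "cd (2*u+1) False = (\<lambda>k. (cd u False (k - ?o) + cd u True (k - ?e))/2)"
    using cd_odF by (auto intro!: ext)
  have eT: "cd (2*u+1) True = (\<lambda>k. (cd (u+1) False (k - 0) + cd (u+1) True (k - (-1)))/2)"
    using cd_odT by (auto intro!: ext)
  have A: "Mom (cd (2*u+1) False) ((1/2+1/2)/2) ((av u + of_int ?o * (1/2) + (- av u + of_int ?e * (1/2)))/2)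
     ((q0 + 2 * of_int ?o * av u + (of_int ?o)^2 * (1/2) + (q1 + 2 * of_int ?e * (- av u) + (of_int ?e)^2 * (1/2)))/2)"
    unfolding eF using Mom_half[OF Mom_add[OF Mom_shift[OF M0, where a="?o"] Mom_shift[OF M1, where a="?e"]]] by simp
  have B: "Mom (cd (2*u+1) True) ((1/2+1/2)/2) ((av (u+1) + 0 * (1/2) + (- av (u+1) + (-1) * (1/2)))/2)
     ((p0 + 2 * 0 * av (u+1) + 0^2 * (1/2) + (p1 + 2 * (-1) * (- av (u+1)) + (-1)^2 * (1/2)))/2)"
    unfolding eT using Mom_half[OF Mom_add[OF Mom_shift[OF N0, where a=0] Mom_shift[OF N1, where a="-1"]]] by simp
  have ou: "odd u \<or> even u" by blast
  show ?thesis unfolding P_def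
  proof (intro exI conjI)
    show "Mom (cd (2*u+1) False) (1/2) (av (2*u+1)) ((q0 + 2 * of_int ?o * av u + (of_int ?o)^2 * (1/2) + (q1 + 2 * of_int ?e * (- av u) + (of_int ?e)^2 * (1/2)))/2)"
      using A by (cases "odd u") (simp_all add: av_def)
    show "Mom (cd (2*u+1) True) (1/2) (- av (2*u+1)) ((p0 + (p1 + 2 * av (u+1) + 1/2))/2)"
      using B by (simp add: av_def)
    show "(q0 + 2 * of_int ?o * av u + (of_int ?o)^2 * (1/2) + (q1 + 2 * of_int ?e * (- av u) + (of_int ?e)^2 * (1/2)))/2
       + (p0 + (p1 + 2 * av (u+1) + 1/2))/2 = v (2*u+1)"
      using q p v_od[OF u] by (cases "odd u") (simp_all add: av_def field_simps)
  qed
qed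

lemma P_all: "P t"
proof (induction t rule: less_induct)
  case (less t)
  show ?case
  proof (cases "t \<le> 1")
    case True
    then show ?thesis using P_0 P_1 by (cases t) auto
  next
    case False
    show ?thesis
    proof (cases "even t")
      case True
      then obtain u where "t = 2*u" by blast
      then show ?thesis using less False P_ev by simp
    next
      case odd: False
      then obtain u where u: "t = 2*u+1" using oddE by blast
      then have "u < t" "u+1 < t" "u \<ge> 1" using False by auto
      then show ?thesis using less u P_od by blast
    qed
  qed
qed

lemma c_eq: "c t k = cd t False k + cd t True k"
proof -
  have HM: "HM (\<lambda>n. I t False k n + I t True k n) (cd t False k + cd t True k)"
    by (intro HM_add Ex_D Ex_all)
  have "(\<lambda>N. real (card {n. n < N \<and> d t n = k}) / real N) = (\<lambda>N. (\<Sum>n<N. I t False k n + I t True k n) / real N)"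
  proof (rule ext)
    fix N
    have "(\<Sum>n<N. I t False k n + I t True k n) = (\<Sum>n<N. of_bool (d t n = k))"
      by (rule sum.cong) (auto simp: I_def)
    also have "\<dots> = real (card ({..<N} \<inter> {n. d t n = k}))" by simp
    also have "{..<N} \<inter> {n. d t n = k} = {n. n < N \<and> d t n = k}" by auto
    finally show "real (card {n. n < N \<and> d t n = k}) / real N = (\<Sum>n<N. I t False k n + I t True k n) / real N" by simp
  qed
  then show ?thesis unfolding c_def using HM_lim[OF HM] by simp
qed

theorem proposition3p5:
  fixes t :: nat
  shows "((\<lambda>k. real_of_int k * c t k) has_sum 0) (UNIV :: int set)
       \<and> ((\<lambda>k. (real_of_int k - 0)^2 * c t k) has_sum v t) (UNIV :: int set)"
proof -
  obtain q0 q1 where M0: "Mom (cd t False) (1/2) (av t) q0" and M1: "Mom (cd t True) (1/2) (- av t) q1"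
    and q: "q0 + q1 = v t" using P_all unfolding P_def by blast
  have e: "c t = (\<lambda>k. cd t False k + cd t True k)" by (rule ext) (rule c_eq)
  have "Mom (c t) (1/2 + 1/2) (av t + - av t) (q0 + q1)"
    unfolding e by (rule Mom_add[OF M0 M1])
  then show ?thesis unfolding Mom_def q by simp
qed

end
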